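(* Let $m\ge0$ be an integer and write $s_n=s_n^{(1,m+2)}$. Then for all $n\ge0$, \[ s_n^2=s_n+2\sum_{k=0}^{n-m-2}\sum_{r=m+2}^{n-k}P_{r-1}^{\{-2,-1,m\}}s_k s_{n-k-r}^2 . \]
   Context: For positive integers $p<q$, $s_n^{(p,q)}$ is defined by $s_n^{(p,q)}=\delta_{0,n}+s_{n-p}^{(p,q)}+s_{n-q}^{(p,q)}$ for $n\ge0$ and $s_n^{(p,q)}=0$ for $n<0$. $\delta_{i,j}$ is $1$ if $i=j$ and $0$ otherwise. For a finite set $W$ of integers, $P_n^W$ is the number of permutations $\pi$ of $\{1,\dots,n\}$ with $\pi(i)-i\in W$ for all $i$ (the permanent of the $n\times n$ $(0,1)$ Toeplitz matrix whose $(i,j)$ entry is $1$ iff $j-i\in W$), with $P_0^W=1$. Empty sums are $0$. *)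

theory Defs
  imports Main "HOL-Combinatorics.Permutations"
begin

text \<open>s_n^{(p,q)}: delta_{0,n} + s_{n-p} + s_{n-q}, with s at negative indices = 0.
  Indices are natural numbers; a term with negative index is replaced by 0.
  The guard 0 < p (resp. 0 < q) only matters outside the intended range p, q positive.\<close>
function spq :: "nat \<Rightarrow> nat \<Rightarrow> nat \<Rightarrow> nat" where
  "spq p q n = (if n = 0 then 1 else 0)
     + (if 0 < p \<and> p \<le> n then spq p q (n - p) else 0)
     + (if 0 < q \<and> q \<le> n then spq p q (n - q) else 0)"
  by auto
termination by (relation "measure (\<lambda>(p,q,n). n)") auto

definition Pperm :: "int set \<Rightarrow> nat \<Rightarrow> nat" where
  "Pperm W n = card {\<pi>. \<pi> permutes {1..n} \<and> (\<forall>i\<in>{1..n}. int (\<pi> i) - int i \<in> W)}"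

end

theory Submission
  imports Defs
begin


definition FS :: "int set \<Rightarrow> nat \<Rightarrow> int set \<Rightarrow> (nat \<Rightarrow> int) set" where
  "FS W N V = {f. (\<forall>i. (i < 1 \<or> N < i) \<longrightarrow> f i = 0) \<and> bij_betw f {1..N} V \<and> (\<forall>i\<in>{1..N}. f i - int i \<in> W)}"

definition cnt :: "int set \<Rightarrow> nat \<Rightarrow> int set \<Rightarrow> nat" where
  "cnt W N V = card (FS W N V)"

lemma FS_finite: "finite V \<Longrightarrow> finite (FS W N V)"
proof -
  assume "finite V"
  have "FS W N V \<subseteq> {f. \<forall>x. (x \<in> {1..N} \<longrightarrow> f x \<in> V) \<and> (x \<notin> {1..N} \<longrightarrow> f x = 0)}"
  proof
    fix f assume "f \<in> FS W N V"
    then have a: "\<forall>i. (i < 1 \<or> N < i) \<longrightarrow> f i = 0" and b: "f ` {1..N} = V"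
      unfolding FS_def bij_betw_def by auto
    show "f \<in> {f. \<forall>x. (x \<in> {1..N} \<longrightarrow> f x \<in> V) \<and> (x \<notin> {1..N} \<longrightarrow> f x = 0)}"
    proof (intro CollectI allI conjI impI)
      fix x assume "x \<in> {1..N}" then show "f x \<in> V" using b by auto
    next
      fix x assume "x \<notin> {1..N}" then show "f x = 0" using a by (cases "x = 0") auto
    qed
  qed
  then show ?thesis using finite_set_of_finite_funs[of "{1..N}" V 0] \<open>finite V\<close>
    by (meson finite_atLeastAtMost finite_subset)
qed

lemma cnt_card: "card V \<noteq> N \<Longrightarrow> cnt W N V = 0"
proof -
  assume "card V \<noteq> N"
  have "FS W N V = {}"
  proof (rule ccontr)
    assume "FS W N V \<noteq> {}"
    then obtain f where "bij_betw f {1..N} V" unfolding FS_def by blast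
    then have "card {1..N} = card V" by (rule bij_betw_same_card)
    then show False using \<open>card V \<noteq> N\<close> by simp
  qed
  then show ?thesis unfolding cnt_def by simp
qed

lemma cnt_0: "cnt W 0 V = (if V = {} then 1 else 0)"
proof -
  have "FS W 0 V = (if V = {} then {\<lambda>i. 0} else {})"
    unfolding FS_def bij_betw_def by (auto simp: fun_eq_iff)
  then show ?thesis unfolding cnt_def by simp
qed

lemma cnt_low:
  assumes "\<forall>w\<in>W. -2 \<le> w" "v \<in> V" "v < -1"
  shows "cnt W N V = 0"
proof -
  have "FS W N V = {}"
  proof (rule ccontr)
    assume "FS W N V \<noteq> {}"
    then obtain f where f: "f \<in> FS W N V" by blast
    then have "v \<in> f ` {1..N}" using assms(2) unfolding FS_def bij_betw_def by auto
    then obtain i where i: "i \<in> {1..N}" "f i = v" by auto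
    then have "f i - int i \<in> W" using f unfolding FS_def by auto
    then have "-2 \<le> f i - int i" using assms(1) by auto
    then show False using i assms(3) by auto
  qed
  then show ?thesis unfolding cnt_def by simp
qed

lemma sh_eq: "(\<lambda>v::int. v - 1) ` A = {v. v + 1 \<in> A}"
  by (auto simp: image_iff) (metis add_diff_cancel_right')


lemma FS_slice:
  assumes "N \<ge> 1" "x \<in> V" "x - 1 \<in> W"
  shows "card {f \<in> FS W N V. f 1 = x} = cnt W (N-1) ((\<lambda>v. v - 1) ` (V - {x}))"
proof -
  define A where "A = {f \<in> FS W N V. f 1 = x}"
  define B where "B = FS W (N-1) ((\<lambda>v. v - 1) ` (V - {x}))"
  define \<phi> :: "(nat \<Rightarrow> int) \<Rightarrow> (nat \<Rightarrow> int)" where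
    "\<phi> f = (\<lambda>i. if 1 \<le> i \<and> i \<le> N-1 then f (Suc i) - 1 else 0)" for f
  define \<psi> :: "(nat \<Rightarrow> int) \<Rightarrow> (nat \<Rightarrow> int)" where
    "\<psi> h = (\<lambda>i. if i = 1 then x else if 2 \<le> i \<and> i \<le> N then h (i-1) + 1 else 0)" for h
  have "bij_betw \<phi> A B"
  proof (rule bij_betw_byWitness[where f'=\<psi>])
    show "\<forall>a\<in>A. \<psi> (\<phi> a) = a"
    proof
      fix f assume "f \<in> A"
      then have f0: "\<forall>i. (i < 1 \<or> N < i) \<longrightarrow> f i = 0" and "f 1 = x"
        unfolding A_def FS_def by auto
      show "\<psi> (\<phi> f) = f"
      proof
        fix i show "\<psi> (\<phi> f) i = f i"
          using f0 \<open>f 1 = x\<close> unfolding \<psi>_def \<phi>_def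
          by (cases "i = 0"; cases "i = 1"; cases "i \<le> N") auto
      qed
    qed
    show "\<forall>a'\<in>B. \<phi> (\<psi> a') = a'"
    proof
      fix h assume "h \<in> B"
      then have h0: "\<forall>i. (i < 1 \<or> N - 1 < i) \<longrightarrow> h i = 0"
        unfolding B_def FS_def by auto
      show "\<phi> (\<psi> h) = h"
      proof
        fix i show "\<phi> (\<psi> h) i = h i"
          using h0 unfolding \<psi>_def \<phi>_def
          by (cases "i = 0"; cases "i \<le> N - 1") auto
      qed
    qed
    show "\<phi> ` A \<subseteq> B"
    proof
      fix g assume "g \<in> \<phi> ` A"
      then obtain f where "f \<in> A" and g: "g = \<phi> f" by auto
      then have f0: "\<forall>i. (i < 1 \<or> N < i) \<longrightarrow> f i = 0" and f1: "f 1 = x"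
        and fb: "bij_betw f {1..N} V" and fw: "\<forall>i\<in>{1..N}. f i - int i \<in> W"
        unfolding A_def FS_def by auto
      have "\<forall>i. (i < 1 \<or> N - 1 < i) \<longrightarrow> g i = 0" unfolding g \<phi>_def by auto
      moreover have "\<forall>i\<in>{1..N-1}. g i - int i \<in> W"
      proof
        fix i assume i: "i \<in> {1..N-1}"
        then have "Suc i \<in> {1..N}" by auto
        then have "f (Suc i) - int (Suc i) \<in> W" using fw by blast
        moreover have "g i - int i = f (Suc i) - int (Suc i)" using i unfolding g \<phi>_def by auto
        ultimately show "g i - int i \<in> W" by (metis add.commute diff_diff_eq of_nat_Suc)
      qed
      moreover have "bij_betw g {1..N-1} ((\<lambda>v. v - 1) ` (V - {x}))"
      proof -
        have b2: "bij_betw f {2..N} (V - {x})"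
        proof -
          have "{1..N} = insert 1 {2..N}" using assms(1) by auto
          then have "bij_betw f (insert 1 {2..N}) V" using fb by simp
          moreover have "f 1 \<in> V" using fb assms(1) bij_betw_apply by fastforce
          ultimately have "bij_betw f {2..N} (V - {f 1})"
            using bij_betw_DiffI[of f "insert 1 {2..N}" V "{1}" "{f 1}"] bij_betw_singletonI[of f 1 "f 1"]
            by simp
          then show ?thesis using f1 by simp
        qed
        have b3: "bij_betw Suc {1..N-1} {2..N}"
          using assms(1) by (simp add: bij_betw_def image_Suc_atLeastAtMost)
        have b4: "bij_betw (\<lambda>v::int. v - 1) (V - {x}) ((\<lambda>v. v - 1) ` (V - {x}))"
          by (simp add: bij_betw_def inj_on_def)
        have "bij_betw ((\<lambda>v. v - 1) \<circ> f \<circ> Suc) {1..N-1} ((\<lambda>v. v - 1) ` (V - {x}))"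
          using bij_betw_trans[OF bij_betw_trans[OF b3 b2] b4] by (simp add: comp_assoc)
        moreover have "\<forall>i\<in>{1..N-1}. g i = ((\<lambda>v. v - 1) \<circ> f \<circ> Suc) i"
          unfolding g \<phi>_def by auto
        ultimately show ?thesis using bij_betw_cong[of "{1..N-1}" g "(\<lambda>v. v - 1) \<circ> f \<circ> Suc"] by simp
      qed
      ultimately show "g \<in> B" unfolding B_def FS_def by blast
    qed
    show "\<psi> ` B \<subseteq> A"
    proof
      fix f assume "f \<in> \<psi> ` B"
      then obtain h where "h \<in> B" and f: "f = \<psi> h" by auto
      then have h0: "\<forall>i. (i < 1 \<or> N - 1 < i) \<longrightarrow> h i = 0"
        and hb: "bij_betw h {1..N-1} ((\<lambda>v. v - 1) ` (V - {x}))"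
        and hw: "\<forall>i\<in>{1..N-1}. h i - int i \<in> W"
        unfolding B_def FS_def by auto
      have "\<forall>i. (i < 1 \<or> N < i) \<longrightarrow> f i = 0" unfolding f \<psi>_def using assms(1) by auto
      moreover have "f 1 = x" unfolding f \<psi>_def by simp
      moreover have "\<forall>i\<in>{1..N}. f i - int i \<in> W"
      proof
        fix i assume i: "i \<in> {1..N}"
        show "f i - int i \<in> W"
        proof (cases "i = 1")
          case True then show ?thesis unfolding f \<psi>_def using assms(3) by simp
        next
          case False
          then have "i - 1 \<in> {1..N-1}" using i by auto
          then have "h (i-1) - int (i-1) \<in> W" using hw by blast
          moreover have "f i - int i = h (i-1) - int (i-1)" unfolding f \<psi>_def using i False by (auto simp: of_nat_diff)
          ultimately show ?thesis by simp
        qed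
      qed
      moreover have "bij_betw f {1..N} V"
      proof -
        have b3: "bij_betw (\<lambda>i. i - 1) {2..N} {1..N-1}"
          by (rule bij_betw_byWitness[where f'=Suc]) auto
        have b4: "bij_betw (\<lambda>v::int. v + 1) ((\<lambda>v. v - 1) ` (V - {x})) (V - {x})"
          by (rule bij_betw_byWitness[where f'="\<lambda>v. v - 1"]) (auto simp: image_iff)
        have "bij_betw ((\<lambda>v. v + 1) \<circ> h \<circ> (\<lambda>i. i - 1)) {2..N} (V - {x})"
          using bij_betw_trans[OF bij_betw_trans[OF b3 hb] b4] by (simp add: comp_assoc)
        moreover have "\<forall>i\<in>{2..N}. f i = ((\<lambda>v. v + 1) \<circ> h \<circ> (\<lambda>i. i - 1)) i"
          unfolding f \<psi>_def by auto
        ultimately have b5: "bij_betw f {2..N} (V - {x})"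
          using bij_betw_cong[of "{2..N}" f "(\<lambda>v. v + 1) \<circ> h \<circ> (\<lambda>i. i - 1)"] by simp
        have "bij_betw f ({1} \<union> {2..N}) ({x} \<union> (V - {x}))"
          by (rule bij_betw_combine) (use b5 \<open>f 1 = x\<close> bij_betw_singletonI[of f 1 x] in auto)
        moreover have "{1} \<union> {2..N} = {1..N}" using assms(1) by auto
        moreover have "{x} \<union> (V - {x}) = V" using assms(2) by auto
        ultimately show ?thesis by simp
      qed
      ultimately show "f \<in> A" unfolding A_def FS_def by blast
    qed
  qed
  then show ?thesis unfolding A_def B_def cnt_def by (rule bij_betw_same_card)
qed

lemma cnt_rec:
  assumes "N \<ge> 1" "finite V" "finite W"
  shows "cnt W N V = (\<Sum>x \<in> V \<inter> (\<lambda>w. 1 + w) ` W. cnt W (N-1) ((\<lambda>v. v - 1) ` (V - {x})))"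
proof -
  let ?I = "V \<inter> (\<lambda>w. 1 + w) ` W"
  have eq: "FS W N V = (\<Union>x\<in>?I. {f \<in> FS W N V. f 1 = x})"
  proof
    show "FS W N V \<subseteq> (\<Union>x\<in>?I. {f \<in> FS W N V. f 1 = x})"
    proof
      fix f assume f: "f \<in> FS W N V"
      have "1 \<in> {1..N}" using assms(1) by simp
      then have "f 1 \<in> V" "f 1 - 1 \<in> W" using f unfolding FS_def
        using bij_betw_apply by fastforce+
      then have "f 1 \<in> ?I" by (auto simp: image_iff intro!: bexI[of _ "f 1 - 1"])
      then show "f \<in> (\<Union>x\<in>?I. {f \<in> FS W N V. f 1 = x})" using f by blast
    qed
  qed blast
  have "cnt W N V = card (\<Union>x\<in>?I. {f \<in> FS W N V. f 1 = x})"
    unfolding cnt_def using eq by simp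
  also have "\<dots> = (\<Sum>x\<in>?I. card {f \<in> FS W N V. f 1 = x})"
    by (rule card_UN_disjoint) (use assms FS_finite in auto)
  also have "\<dots> = (\<Sum>x\<in>?I. cnt W (N-1) ((\<lambda>v. v - 1) ` (V - {x})))"
  proof (rule sum.cong)
    fix x assume "x \<in> ?I"
    then have "x \<in> V" "x - 1 \<in> W" by auto
    then show "card {f \<in> FS W N V. f 1 = x} = cnt W (N-1) ((\<lambda>v. v - 1) ` (V - {x}))"
      using FS_slice assms(1) by blast
  qed simp
  finally show ?thesis .
qed

definition Wm :: "nat \<Rightarrow> int set" where "Wm m = {-2, -1, int m}"

lemma cnt3:
  assumes "N \<ge> 1" "finite V"
  shows "cnt (Wm m) N V =
    (if -1 \<in> V then cnt (Wm m) (N-1) {v. v + 1 \<in> V - {-1}} else 0)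
  + (if 0 \<in> V then cnt (Wm m) (N-1) {v. v + 1 \<in> V - {0}} else 0)
  + (if 1 + int m \<in> V then cnt (Wm m) (N-1) {v. v + 1 \<in> V - {1 + int m}} else 0)"
proof -
  have im: "(\<lambda>w. 1 + w) ` Wm m = {-1, 0, 1 + int m}" unfolding Wm_def by auto
  have "cnt (Wm m) N V = (\<Sum>x \<in> V \<inter> {-1, 0, 1 + int m}. cnt (Wm m) (N-1) {v. v + 1 \<in> V - {x}})"
    using cnt_rec[OF assms, of "Wm m"] unfolding im sh_eq by (simp add: Wm_def)
  also have "\<dots> = (\<Sum>x \<in> {-1, 0, 1 + int m}. if x \<in> V then cnt (Wm m) (N-1) {v. v + 1 \<in> V - {x}} else 0)"
    by (subst Int_commute) (rule sum.inter_restrict, simp)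
  finally show ?thesis by simp
qed

lemma cntW_low: "v \<in> V \<Longrightarrow> v < -1 \<Longrightarrow> cnt (Wm m) N V = 0"
  by (rule cnt_low[of "Wm m"]) (auto simp: Wm_def)

lemma cntW_card: "card V \<noteq> N \<Longrightarrow> cnt (Wm m) N V = 0"
  by (rule cnt_card)

lemma Clex:
  "e < f \<Longrightarrow> cnt (Wm m) N ({-1..int N} - {int e, int f}) =
     (if e + 1 \<le> N then cnt (Wm m) (N-e-1) ({0..int (N-e-1)} - {int f - int e - 1}) else 0)"
proof (induction e arbitrary: N f)
  case 0
  show ?case
  proof (cases "N = 0")
    case True
    have "-1 \<in> {-1..int N} - {int 0, int f}" using 0 by auto
    then have "{-1..int N} - {int 0, int f} \<noteq> {}" by blast
    then show ?thesis using True by (simp only: cnt_0) simp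
  next
    case False
    let ?V = "{-1..int N} - {int 0, int f}"
    have z1: "cnt (Wm m) (N-1) {v. v + 1 \<in> ?V - {0}} = 0"
      by (rule cntW_low[of "-2"]) (use 0 in auto)
    have z2: "cnt (Wm m) (N-1) {v. v + 1 \<in> ?V - {1 + int m}} = 0"
      by (rule cntW_low[of "-2"]) (use 0 in auto)
    have s: "{v. v + 1 \<in> ?V - {-1}} = {0..int (N-1)} - {int f - 1}"
      using False by auto
    show ?thesis using cnt3[of N ?V m] False z1 z2 s by simp
  qed
next
  case (Suc e)
  show ?case
  proof (cases "N = 0")
    case True
    have "-1 \<in> {-1..int N} - {int (Suc e), int f}" using Suc by auto
    then have "{-1..int N} - {int (Suc e), int f} \<noteq> {}" by blast
    then show ?thesis using True by (simp only: cnt_0) simp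
  next
    case False
    let ?V = "{-1..int N} - {int (Suc e), int f}"
    have z1: "cnt (Wm m) (N-1) {v. v + 1 \<in> ?V - {0}} = 0"
      by (rule cntW_low[of "-2"]) (use Suc in auto)
    have z2: "cnt (Wm m) (N-1) {v. v + 1 \<in> ?V - {1 + int m}} = 0"
      by (rule cntW_low[of "-2"]) (use Suc in auto)
    have s: "{v. v + 1 \<in> ?V - {-1}} = {-1..int (N-1)} - {int e, int (f-1)}"
      using False Suc.prems by auto
    have "cnt (Wm m) N ?V = cnt (Wm m) (N-1) ({-1..int (N-1)} - {int e, int (f-1)})"
      using cnt3[of N ?V m] False z1 z2 s by simp
    also have "\<dots> = (if e + 1 \<le> N - 1 then cnt (Wm m) (N-1-e-1) ({0..int (N-1-e-1)} - {int (f-1) - int e - 1}) else 0)"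
      using Suc.IH[of "f-1" "N-1"] Suc.prems by simp
    also have "\<dots> = (if Suc e + 1 \<le> N then cnt (Wm m) (N-Suc e-1) ({0..int (N-Suc e-1)} - {int f - int (Suc e) - 1}) else 0)"
    proof -
      have ceq: "(e + 1 \<le> N - 1) = (Suc e + 1 \<le> N)" using False by arith
      have neq: "N-1-e-1 = N - Suc e - 1" by simp
      have feq: "int (f-1) - int e - 1 = int f - int (Suc e) - 1" using Suc.prems by (simp add: of_nat_diff)
      show ?thesis by (simp only: ceq neq feq)
    qed
    finally show ?thesis .
  qed
qed

definition C :: "nat \<Rightarrow> nat \<Rightarrow> nat \<Rightarrow> nat" where
  "C m N d = cnt (Wm m) N ({0..int N} - {int d - 1})"

definition G :: "nat \<Rightarrow> nat \<Rightarrow> nat \<Rightarrow> nat" where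
  "G m L d = (if L = 0 then 0 else C m (L-1) d)"

lemma C1: "C m N 1 = (if N = 0 then 1 else C m (N-1) (m+1))"
proof (cases "N = 0")
  case True
  then show ?thesis by (simp add: C_def cnt_0)
next
  case False
  let ?V = "{0..int N} - {int 1 - 1}"
  have "C m N 1 = (if 1 + int m \<in> ?V then cnt (Wm m) (N-1) {v. v + 1 \<in> ?V - {1 + int m}} else 0)"
    unfolding C_def using cnt3[of N ?V m] False by simp
  also have "\<dots> = C m (N-1) (m+1)"
  proof (cases "m + 1 \<le> N")
    case True
    have "{v. v + 1 \<in> ?V - {1 + int m}} = {0..int (N-1)} - {int (m+1) - 1}"
      using True by auto
    then show ?thesis using True unfolding C_def by simp
  next
    case F: False
    have "{0..int (N-1)} - {int (m+1) - 1} = {0..int (N-1)}" using F False by auto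
    then have "C m (N-1) (m+1) = 0" unfolding C_def using False by (simp add: cntW_card)
    then show ?thesis using F by simp
  qed
  finally show ?thesis using False by simp
qed

lemma C2:
  assumes "2 \<le> d" "d \<le> m + 1"
  shows "C m N d = (if N = 0 then 0 else C m (N-1) (d-1) + (if d \<le> N then C m (N-d) (m+2-d) else 0))"
proof (cases "N = 0")
  case True
  have "{0..int 0} - {int d - 1} = {0}" using assms by auto
  then show ?thesis using True by (simp add: C_def cnt_0)
next
  case False
  let ?V = "{0..int N} - {int d - 1}"
  have a: "{v. v + 1 \<in> ?V - {0}} = {0..int (N-1)} - {int (d-1) - 1}"
    using assms False by (auto simp: of_nat_diff)
  have b: "(if 1 + int m \<in> ?V then cnt (Wm m) (N-1) {v. v + 1 \<in> ?V - {1 + int m}} else 0)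
      = (if d \<le> N then C m (N-d) (m+2-d) else 0)"
  proof (cases "m + 1 \<le> N")
    case True
    have "{v. v + 1 \<in> ?V - {1 + int m}} = {-1..int (N-1)} - {int (d-2), int m}"
      using True assms by (auto simp: of_nat_diff)
    moreover have "cnt (Wm m) (N-1) ({-1..int (N-1)} - {int (d-2), int m}) =
       (if d - 2 + 1 \<le> N - 1 then cnt (Wm m) (N-1-(d-2)-1) ({0..int (N-1-(d-2)-1)} - {int m - int (d-2) - 1}) else 0)"
      by (rule Clex) (use assms in auto)
    moreover have "1 + int m \<in> ?V" using True assms by auto
    moreover have "(d - 2 + 1 \<le> N - 1) = (d \<le> N)" using assms False by auto
    moreover have "N-1-(d-2)-1 = N - d" using assms by auto
    moreover have "int m - int (d-2) - 1 = int (m+2-d) - 1" using assms by (auto simp: of_nat_diff)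
    ultimately show ?thesis unfolding C_def by (simp only: if_True)
  next
    case F: False
    have "1 + int m \<notin> ?V" using F by auto
    moreover have "d \<le> N \<Longrightarrow> C m (N-d) (m+2-d) = 0"
    proof -
      assume "d \<le> N"
      have "{0..int (N-d)} - {int (m+2-d) - 1} = {0..int (N-d)}" using F assms \<open>d \<le> N\<close> by (auto simp: of_nat_diff)
      then show ?thesis unfolding C_def by (simp add: cntW_card)
    qed
    ultimately show ?thesis by auto
  qed
  have m1: "-1 \<notin> ?V" by auto
  have "0 \<in> ?V" using assms by auto
  then have "C m N d = cnt (Wm m) (N-1) {v. v + 1 \<in> ?V - {0}} + (if 1 + int m \<in> ?V then cnt (Wm m) (N-1) {v. v + 1 \<in> ?V - {1 + int m}} else 0)"
    unfolding C_def using cnt3[of N ?V m] False m1 by simp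
  then show ?thesis using a b False unfolding C_def by simp
qed

lemma G_rec:
  assumes "1 \<le> d" "d \<le> m + 1"
  shows "G m L d = (if d = 1 \<and> L = 1 then 1 else 0) + (if 2 \<le> d then G m (L-1) (d-1) else 0)
     + (if d < L then G m (L-d) (m+2-d) else 0)"
proof (cases "d = 1")
  case True
  then show ?thesis unfolding G_def using C1[of m "L-1"] by auto
next
  case False
  then show ?thesis unfolding G_def using C2[of d m "L-1"] assms by auto
qed

lemma G_small: "j < e \<Longrightarrow> G m j e = 0"
proof -
  assume "j < e"
  show ?thesis
  proof (cases "j = 0")
    case False
    have "{0..int (j-1)} - {int e - 1} = {0..int (j-1)}" using \<open>j < e\<close> False by (auto simp: of_nat_diff)
    then show ?thesis unfolding G_def C_def using False by (simp add: cntW_card)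
  qed (simp add: G_def)
qed

lemma nat_img: "nat ` {1..int n} = {1..n}"
proof
  show "nat ` {1..int n} \<subseteq> {1..n}" by auto
  show "{1..n} \<subseteq> nat ` {1..int n}"
  proof
    fix x assume "x \<in> {1..n}"
    then have "int x \<in> {1..int n}" "nat (int x) = x" by auto
    then show "x \<in> nat ` {1..int n}" by (metis imageI)
  qed
qed

lemma int_img: "int ` {1..n} = {1..int n}"
proof
  show "int ` {1..n} \<subseteq> {1..int n}" by auto
  show "{1..int n} \<subseteq> int ` {1..n}"
  proof
    fix x assume "x \<in> {1..int n}"
    then have "nat x \<in> {1..n}" "int (nat x) = x" by auto
    then show "x \<in> int ` {1..n}" by (metis imageI)
  qed
qed

lemma Pperm_C: "Pperm {-2, -1, int m} n = C m n 1"
proof -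
  let ?P = "{\<pi>. \<pi> permutes {1..n} \<and> (\<forall>i\<in>{1..n}. int (\<pi> i) - int i \<in> Wm m)}"
  define \<phi> :: "(nat \<Rightarrow> nat) \<Rightarrow> nat \<Rightarrow> int" where
    "\<phi> \<pi> = (\<lambda>i. if i \<in> {1..n} then int (\<pi> i) else 0)" for \<pi>
  define \<psi> :: "(nat \<Rightarrow> int) \<Rightarrow> nat \<Rightarrow> nat" where
    "\<psi> f = (\<lambda>i. if i \<in> {1..n} then nat (f i) else i)" for f
  have V: "{0..int n} - {int 1 - 1} = {1..int n}" by auto
  have "bij_betw \<phi> ?P (FS (Wm m) n {1..int n})"
  proof (rule bij_betw_byWitness[where f'=\<psi>])
    show "\<forall>a\<in>?P. \<psi> (\<phi> a) = a"
    proof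
      fix \<pi> assume "\<pi> \<in> ?P"
      then have "\<pi> permutes {1..n}" by simp
      then have "\<forall>i. i \<notin> {1..n} \<longrightarrow> \<pi> i = i" by (simp add: permutes_not_in)
      then show "\<psi> (\<phi> \<pi>) = \<pi>" unfolding \<psi>_def \<phi>_def by auto
    qed
    show "\<forall>a'\<in>FS (Wm m) n {1..int n}. \<phi> (\<psi> a') = a'"
    proof
      fix f assume f: "f \<in> FS (Wm m) n {1..int n}"
      then have z: "\<forall>i. (i < 1 \<or> n < i) \<longrightarrow> f i = 0" and b: "bij_betw f {1..n} {1..int n}"
        unfolding FS_def by auto
      show "\<phi> (\<psi> f) = f"
      proof
        fix i show "\<phi> (\<psi> f) i = f i"
        proof (cases "i \<in> {1..n}")
          case True
          have "f i \<in> {1..int n}" by (rule bij_betw_apply[OF b True])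
          then show ?thesis using True unfolding \<phi>_def \<psi>_def by auto
        next
          case False
          have "f i = 0" using z False by (cases "i = 0") auto
          then show ?thesis using False unfolding \<phi>_def by auto
        qed
      qed
    qed
    show "\<phi> ` ?P \<subseteq> FS (Wm m) n {1..int n}"
    proof
      fix g assume "g \<in> \<phi> ` ?P"
      then obtain \<pi> where p: "\<pi> permutes {1..n}" and w: "\<forall>i\<in>{1..n}. int (\<pi> i) - int i \<in> Wm m"
        and g: "g = \<phi> \<pi>" by auto
      have "bij_betw (int \<circ> \<pi>) {1..n} {1..int n}"
      proof (rule bij_betw_trans[OF permutes_imp_bij[OF p]])
        show "bij_betw int {1..n} {1..int n}" unfolding bij_betw_def using int_img by simp
      qed
      then have "bij_betw g {1..n} {1..int n}"
        using bij_betw_cong[of "{1..n}" g "int \<circ> \<pi>"] unfolding g \<phi>_def by simp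
      moreover have "\<forall>i. (i < 1 \<or> n < i) \<longrightarrow> g i = 0" unfolding g \<phi>_def by auto
      moreover have "\<forall>i\<in>{1..n}. g i - int i \<in> Wm m" using w unfolding g \<phi>_def by auto
      ultimately show "g \<in> FS (Wm m) n {1..int n}" unfolding FS_def by blast
    qed
    show "\<psi> ` FS (Wm m) n {1..int n} \<subseteq> ?P"
    proof
      fix p assume "p \<in> \<psi> ` FS (Wm m) n {1..int n}"
      then obtain f where f: "f \<in> FS (Wm m) n {1..int n}" and p: "p = \<psi> f" by auto
      then have b: "bij_betw f {1..n} {1..int n}" and w: "\<forall>i\<in>{1..n}. f i - int i \<in> Wm m"
        unfolding FS_def by auto
      have pos: "\<forall>i\<in>{1..n}. f i \<in> {1..int n}" using bij_betw_apply[OF b] by simp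
      have "bij_betw (nat \<circ> f) {1..n} {1..n}"
      proof (rule bij_betw_trans[OF b])
        show "bij_betw nat {1..int n} {1..n}"
        proof -
          have "inj_on nat {1..int n}" by (rule inj_onI) auto
          then show ?thesis unfolding bij_betw_def using nat_img by simp
        qed
      qed
      then have "bij_betw p {1..n} {1..n}"
        using bij_betw_cong[of "{1..n}" p "nat \<circ> f"] unfolding p \<psi>_def by simp
      moreover have "\<And>x. x \<notin> {1..n} \<Longrightarrow> p x = x" unfolding p \<psi>_def by auto
      ultimately have "p permutes {1..n}" by (rule bij_imp_permutes)
      moreover have "\<forall>i\<in>{1..n}. int (p i) - int i \<in> Wm m"
      proof
        fix i assume i: "i \<in> {1..n}"
        have "f i \<in> {1..int n}" using pos i by blast
        then have "0 \<le> f i" by simp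
        then have "int (p i) = f i" using i unfolding p \<psi>_def by simp
        then show "int (p i) - int i \<in> Wm m" using w i by simp
      qed
      ultimately show "p \<in> ?P" by blast
    qed
  qed
  then have "card ?P = card (FS (Wm m) n {1..int n})" by (rule bij_betw_same_card)
  then show ?thesis unfolding Pperm_def C_def cnt_def V by (simp add: Wm_def)
qed



declare spq.simps[simp del]

definition S :: "nat \<Rightarrow> nat \<Rightarrow> nat" where "S m n = spq 1 (m+2) n"

lemma S_0: "S m 0 = 1"
  unfolding S_def by (subst spq.simps) simp

lemma S_rec: "n \<ge> 1 \<Longrightarrow> S m n = S m (n-1) + (if m+2 \<le> n then S m (n-(m+2)) else 0)"
  unfolding S_def by (subst spq.simps) simp

lemma PL:
  "1 \<le> d \<Longrightarrow> d \<le> m+1 \<Longrightarrow> d \<le> L \<Longrightarrow>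
    S m L * S m (L-d) = (\<Sum>j=1..L. G m j d * (S m (L-j))^2)"
proof (induction L arbitrary: d rule: less_induct)
  case (less L)
  let ?X = "\<lambda>j. (S m (L-j))^2"
  have L1: "L \<ge> 1" using less.prems by simp
  have e1: "S m L * S m (L-d) = S m (L-1) * S m (L-d) + (if m+2 \<le> L then S m (L-(m+2)) * S m (L-d) else 0)"
    using S_rec[OF L1, of m] by (simp add: algebra_simps)
  have "(\<Sum>j=1..L. G m j d * ?X j) = (\<Sum>j=1..L. (if d = 1 \<and> j = 1 then 1 else 0) * ?X j
      + (if 2 \<le> d then G m (j-1) (d-1) else 0) * ?X j + (if d < j then G m (j-d) (m+2-d) else 0) * ?X j)"
    by (rule sum.cong) (use G_rec[of d m] less.prems in \<open>auto simp: algebra_simps\<close>)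
  also have "\<dots> = (\<Sum>j=1..L. (if d = 1 \<and> j = 1 then 1 else 0) * ?X j)
      + (\<Sum>j=1..L. (if 2 \<le> d then G m (j-1) (d-1) else 0) * ?X j) + (\<Sum>j=1..L. (if d < j then G m (j-d) (m+2-d) else 0) * ?X j)"
    by (simp add: sum.distrib)
  finally have split: "(\<Sum>j=1..L. G m j d * ?X j) = (\<Sum>j=1..L. (if d = 1 \<and> j = 1 then 1 else 0) * ?X j)
      + (\<Sum>j=1..L. (if 2 \<le> d then G m (j-1) (d-1) else 0) * ?X j) + (\<Sum>j=1..L. (if d < j then G m (j-d) (m+2-d) else 0) * ?X j)" .
  have A: "(\<Sum>j=1..L. (if d = 1 \<and> j = 1 then 1 else 0) * ?X j) = (if d = 1 then (S m (L-1))^2 else 0)"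
  proof (cases "d = 1")
    case True
    have "(\<Sum>j=1..L. (if d = 1 \<and> j = 1 then 1 else 0) * ?X j) = (\<Sum>j\<in>{1..L}. if j = 1 then ?X j else 0)"
      using True by (intro sum.cong) auto
    also have "\<dots> = ?X 1" using L1 by (simp add: sum.delta)
    finally show ?thesis using True by simp
  qed simp
  have B: "(\<Sum>j=1..L. (if 2 \<le> d then G m (j-1) (d-1) else 0) * ?X j)
      = (if 2 \<le> d then (\<Sum>j=1..L-1. G m j (d-1) * (S m (L-1-j))^2) else 0)"
  proof (cases "2 \<le> d")
    case True
    have "(\<Sum>j=1..L. G m (j-1) (d-1) * ?X j) = (\<Sum>j=Suc 0..Suc (L-1). G m (j-1) (d-1) * ?X j)"
      using L1 by simp
    also have "\<dots> = (\<Sum>j=0..L-1. G m j (d-1) * ?X (Suc j))"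
      by (subst sum.shift_bounds_cl_Suc_ivl) simp
    also have "\<dots> = (\<Sum>j=1..L-1. G m j (d-1) * ?X (Suc j))"
      by (rule sum.mono_neutral_right) (auto simp: G_def)
    also have "\<dots> = (\<Sum>j=1..L-1. G m j (d-1) * (S m (L-1-j))^2)"
      by simp
    finally show ?thesis using True by simp
  qed simp
  have C: "(\<Sum>j=1..L. (if d < j then G m (j-d) (m+2-d) else 0) * ?X j)
      = (\<Sum>i=1..L-d. G m i (m+2-d) * (S m (L-d-i))^2)"
  proof -
    have "(\<Sum>j=1..L. (if d < j then G m (j-d) (m+2-d) else 0) * ?X j)
        = (\<Sum>j\<in>{1..L}. if j \<in> {d+1..L} then G m (j-d) (m+2-d) * ?X j else 0)"
      by (rule sum.cong) auto
    also have "\<dots> = (\<Sum>j\<in>{1..L} \<inter> {d+1..L}. G m (j-d) (m+2-d) * ?X j)"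
      by (rule sum.inter_restrict[symmetric]) simp
    also have "{1..L} \<inter> {d+1..L} = {1+d..(L-d)+d}" using less.prems by auto
    also have "(\<Sum>j\<in>{1+d..(L-d)+d}. G m (j-d) (m+2-d) * ?X j) = (\<Sum>i=1..L-d. G m (i+d-d) (m+2-d) * ?X (i+d))"
      by (subst sum.shift_bounds_cl_nat_ivl) simp
    also have "\<dots> = (\<Sum>i=1..L-d. G m i (m+2-d) * (S m (L-d-i))^2)"
      by (rule sum.cong) (auto simp: add.commute)
    finally show ?thesis .
  qed
  have T1: "S m (L-1) * S m (L-d) = (if d = 1 then (S m (L-1))^2 else 0)
      + (if 2 \<le> d then (\<Sum>j=1..L-1. G m j (d-1) * (S m (L-1-j))^2) else 0)"
  proof (cases "d = 1")
    case True then show ?thesis by (simp add: power2_eq_square)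
  next
    case False
    then have "S m (L-1) * S m (L-1-(d-1)) = (\<Sum>j=1..L-1. G m j (d-1) * (S m (L-1-j))^2)"
      using less.IH[of "L-1" "d-1"] less.prems L1 by simp
    moreover have "L-1-(d-1) = L-d" using less.prems False by simp
    ultimately show ?thesis using False less.prems by simp
  qed
  have T2: "(if m+2 \<le> L then S m (L-(m+2)) * S m (L-d) else 0) = (\<Sum>i=1..L-d. G m i (m+2-d) * (S m (L-d-i))^2)"
  proof (cases "m+2 \<le> L")
    case True
    have "S m (L-d) * S m (L-d-(m+2-d)) = (\<Sum>i=1..L-d. G m i (m+2-d) * (S m (L-d-i))^2)"
      using less.IH[of "L-d" "m+2-d"] less.prems True by simp
    moreover have "L-d-(m+2-d) = L-(m+2)" using less.prems True by simp
    ultimately show ?thesis using True by (simp add: mult.commute)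
  next
    case False
    have "(\<Sum>i=1..L-d. G m i (m+2-d) * (S m (L-d-i))^2) = 0"
    proof (rule sum.neutral, rule ballI)
      fix i assume "i \<in> {1..L-d}"
      then have "i < m+2-d" using False less.prems by auto
      then show "G m i (m+2-d) * (S m (L-d-i))^2 = 0" by (simp add: G_small)
    qed
    then show ?thesis using False by simp
  qed
  show ?case using e1 split A B C T1 T2 by simp
qed



definition R :: "nat \<Rightarrow> nat \<Rightarrow> nat" where
  "R m n = (\<Sum>r=m+2..n. G m (r-1) (m+1) * (S m (n-r))^2)"

definition Y :: "nat \<Rightarrow> nat \<Rightarrow> nat" where
  "Y m n = (\<Sum>k\<le>n. S m (n-k) * R m k)"

lemma R_small: "n < m + 2 \<Longrightarrow> R m n = 0"
  unfolding R_def by simp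

lemma step1:
  assumes "m + 2 \<le> n"
  shows "S m (n-1) * S m (n-(m+2)) = R m n"
proof -
  have "S m (n-1) * S m (n-1-(m+1)) = (\<Sum>j=1..n-1. G m j (m+1) * (S m (n-1-j))^2)"
    using PL[of "m+1" m "n-1"] assms by simp
  also have "\<dots> = (\<Sum>j=m+1..n-1. G m j (m+1) * (S m (n-1-j))^2)"
    by (rule sum.mono_neutral_right) (auto simp: G_small)
  also have "\<dots> = (\<Sum>j=Suc (m+1)..Suc (n-1). G m (j-1) (m+1) * (S m (n-j))^2)"
    by (subst sum.shift_bounds_cl_Suc_ivl) simp
  also have "\<dots> = R m n" unfolding R_def using assms by (simp add: Suc_diff_1)
  finally show ?thesis using assms by (simp add: numeral_2_eq_2)
qed

lemma Y_rec:
  assumes "n \<ge> 1"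
  shows "Y m n = R m n + Y m (n-1) + (if m+2 \<le> n then Y m (n-(m+2)) else 0)"
proof -
  obtain n' where n': "n = Suc n'" using assms by (cases n) auto
  have "Y m n = (\<Sum>k\<le>n'. S m (n-k) * R m k) + S m 0 * R m n"
    unfolding Y_def n' by simp
  also have "(\<Sum>k\<le>n'. S m (n-k) * R m k) = (\<Sum>k\<le>n'. S m (n'-k) * R m k + (if m+2 \<le> n-k then S m (n-k-(m+2)) * R m k else 0))"
  proof (rule sum.cong)
    fix k assume "k \<in> {..n'}"
    then have "n - k \<ge> 1" "n - k - 1 = n' - k" using n' by auto
    then show "S m (n-k) * R m k = S m (n'-k) * R m k + (if m+2 \<le> n-k then S m (n-k-(m+2)) * R m k else 0)"
      using S_rec[of "n-k" m] by (simp add: algebra_simps)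
  qed simp
  also have "\<dots> = Y m n' + (\<Sum>k\<le>n'. if m+2 \<le> n-k then S m (n-k-(m+2)) * R m k else 0)"
    unfolding Y_def by (simp add: sum.distrib)
  also have "(\<Sum>k\<le>n'. if m+2 \<le> n-k then S m (n-k-(m+2)) * R m k else 0) = (if m+2 \<le> n then Y m (n-(m+2)) else 0)"
  proof (cases "m+2 \<le> n")
    case True
    have "(\<Sum>k\<le>n'. if m+2 \<le> n-k then S m (n-k-(m+2)) * R m k else 0)
        = (\<Sum>k\<in>{..n'}. if k \<in> {..n-(m+2)} then S m (n-k-(m+2)) * R m k else 0)"
      by (rule sum.cong) (use True in auto)
    also have "\<dots> = (\<Sum>k\<in>{..n'} \<inter> {..n-(m+2)}. S m (n-k-(m+2)) * R m k)"
      by (rule sum.inter_restrict[symmetric]) simp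
    also have "{..n'} \<inter> {..n-(m+2)} = {..n-(m+2)}" using n' True by auto
    also have "(\<Sum>k\<le>n-(m+2). S m (n-k-(m+2)) * R m k) = Y m (n-(m+2))"
      unfolding Y_def by (rule sum.cong) (auto simp: algebra_simps)
    finally show ?thesis using True by simp
  next
    case False
    then show ?thesis by (auto intro!: sum.neutral)
  qed
  finally show ?thesis using n' S_0 by simp
qed

lemma main_Y: "(S m n)^2 = S m n + 2 * Y m n"
proof (induction n rule: less_induct)
  case (less n)
  show ?case
  proof (cases "n = 0")
    case True
    then show ?thesis by (simp add: S_0 Y_def R_small)
  next
    case False
    then have n1: "n \<ge> 1" by simp
    have IH1: "(S m (n-1))^2 = S m (n-1) + 2 * Y m (n-1)" using less.IH[of "n-1"] n1 by simp
    show ?thesis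
    proof (cases "m+2 \<le> n")
      case True
      have IH2: "(S m (n-(m+2)))^2 = S m (n-(m+2)) + 2 * Y m (n-(m+2))" using less.IH[of "n-(m+2)"] True by simp
      have "S m n = S m (n-1) + S m (n-(m+2))" using S_rec[OF n1, of m] True by simp
      then have "(S m n)^2 = (S m (n-1))^2 + (S m (n-(m+2)))^2 + 2 * (S m (n-1) * S m (n-(m+2)))"
        by (simp add: power2_eq_square algebra_simps)
      also have "\<dots> = S m (n-1) + 2 * Y m (n-1) + (S m (n-(m+2)) + 2 * Y m (n-(m+2))) + 2 * R m n"
        using IH1 IH2 step1[OF True] by simp
      also have "\<dots> = S m n + 2 * Y m n"
        using Y_rec[OF n1, of m] S_rec[OF n1, of m] True by simp
      finally show ?thesis .
    next
      case F: False
      have "S m n = S m (n-1)" using S_rec[OF n1, of m] F by simp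
      moreover have "Y m n = Y m (n-1)" using Y_rec[OF n1, of m] F R_small[of n m] by simp
      ultimately show ?thesis using IH1 by simp
    qed
  qed
qed

theorem mainTheorem9:
  fixes m n :: nat
  shows "(spq 1 (m+2) n)^2 = spq 1 (m+2) n
     + 2 * (\<Sum>k<n-m-1. \<Sum>r=m+2..n-k.
              Pperm {-2, -1, int m} (r - 1) * spq 1 (m+2) k * (spq 1 (m+2) (n-k-r))^2)"
proof -
  have P: "Pperm {-2, -1, int m} (r - 1) = G m (r-1) (m+1)" if "m+2 \<le> r" for r
  proof -
    have "C m (r-1) 1 = C m (r-1-1) (m+1)" using C1[of m "r-1"] that by simp
    then show ?thesis using that by (simp add: Pperm_C G_def)
  qed
  have "(\<Sum>k<n-m-1. \<Sum>r=m+2..n-k. Pperm {-2, -1, int m} (r - 1) * spq 1 (m+2) k * (spq 1 (m+2) (n-k-r))^2)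
      = (\<Sum>k<n-m-1. S m k * R m (n-k))"
  proof (rule sum.cong)
    fix k
    show "(\<Sum>r=m+2..n-k. Pperm {-2, -1, int m} (r - 1) * spq 1 (m+2) k * (spq 1 (m+2) (n-k-r))^2) = S m k * R m (n-k)"
      unfolding R_def S_def sum_distrib_left
    proof (rule sum.cong)
      fix r assume "r \<in> {m+2..n-k}"
      then have "Pperm {-2, -1, int m} (r - 1) = G m (r-1) (m+1)" using P by simp
      then show "Pperm {-2, -1, int m} (r - 1) * spq 1 (m+2) k * (spq 1 (m+2) (n-k-r))^2
          = spq 1 (m+2) k * (G m (r-1) (m+1) * (spq 1 (m+2) (n-k-r))^2)"
        by (simp add: algebra_simps)
    qed simp
  qed simp
  also have "\<dots> = (\<Sum>k\<le>n. S m k * R m (n-k))"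
    by (rule sum.mono_neutral_left) (auto simp: R_small)
  also have "\<dots> = Y m n"
  proof -
    have "(\<Sum>k\<le>n. S m k * R m (n-k)) = (\<Sum>k=0..n. S m k * R m (n-k))" by (simp add: atMost_atLeast0)
    also have "\<dots> = (\<Sum>k=0..n. S m (n + 0 - k) * R m (n - (n + 0 - k)))"
      by (rule sum.atLeastAtMost_rev)
    also have "\<dots> = (\<Sum>k=0..n. S m (n-k) * R m k)" by (rule sum.cong) auto
    finally show ?thesis unfolding Y_def by (simp add: atMost_atLeast0)
  qed
  finally have "(\<Sum>k<n-m-1. \<Sum>r=m+2..n-k. Pperm {-2, -1, int m} (r - 1) * spq 1 (m+2) k * (spq 1 (m+2) (n-k-r))^2) = Y m n" .
  then show ?thesis using main_Y[of m n] unfolding S_def by simp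
qed

end
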